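(* Let $f_i\in\mathbb{Z}[x_1,\dots,x_n]$ ($i\in[m]$) have degree one and $g_j\in\mathbb{Z}[x_1,\dots,x_n]$ ($j\in[\ell]$) have degree at most an integer $d\ge1$, all with coefficients of absolute value at most $H$. Let $\delta$ be a positive integer. Let $P:=\{x\in\mathbb{R}^n: f_i(x)\le 0,\ i\in[m]\}$ and $$R:=\{x\in P: g_j(x)\le 0,\ j\in[\ell]\},\qquad S:=\{x\in P:\ \ell\delta g_j(x)\le 1,\ j\in[\ell]\}.$$ Assume $P$ is bounded. If $R$ is nonempty, then $S$ contains a rational vector whose encoding size is bounded by a polynomial in $n,d,\log\ell,\log H,\log\delta$. *)

theory Defs
  imports Complex_Main
begin

definition monomials_upto :: "nat \<Rightarrow> nat \<Rightarrow> (nat \<Rightarrow> nat) set" where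
  "monomials_upto n d = {\<alpha>. (\<forall>i\<ge>n. \<alpha> i = 0) \<and> (\<Sum>i<n. \<alpha> i) \<le> d}"

text \<open>Evaluation of the integer polynomial of degree at most d with coefficient
  function c (coefficient of the monomial with exponent vector alpha) at x.\<close>
definition poly_eval :: "nat \<Rightarrow> nat \<Rightarrow> ((nat \<Rightarrow> nat) \<Rightarrow> int) \<Rightarrow> (nat \<Rightarrow> real) \<Rightarrow> real" where
  "poly_eval n d c x = (\<Sum>\<alpha>\<in>monomials_upto n d. real_of_int (c \<alpha>) * (\<Prod>i<n. x i ^ \<alpha> i))"

definition aff_eval :: "nat \<Rightarrow> (nat \<Rightarrow> int) \<Rightarrow> int \<Rightarrow> (nat \<Rightarrow> real) \<Rightarrow> real" where
  "aff_eval n a b x = (\<Sum>i<n. real_of_int (a i) * x i) + real_of_int b"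

text \<open>Binary encoding sizes (Schrijver's convention).\<close>
definition int_size :: "int \<Rightarrow> nat" where
  "int_size z = 1 + nat \<lceil>log 2 (real_of_int \<bar>z\<bar> + 1)\<rceil>"

definition rat_size :: "rat \<Rightarrow> nat" where
  "rat_size r = (case quotient_of r of (p, q) \<Rightarrow> int_size p + int_size q)"

definition vec_size :: "nat \<Rightarrow> (nat \<Rightarrow> rat) \<Rightarrow> nat" where
  "vec_size n q = n + (\<Sum>i<n. rat_size (q i))"

end

theory Submission
  imports Defs "Jordan_Normal_Form.Determinant"
begin


lemma det_bound:
  fixes M :: "real mat"
  assumes M: "M \<in> carrier_mat n n"
    and ent: "\<And>i j. i < n \<Longrightarrow> j < n \<Longrightarrow> M $$ (i,j) \<in> \<int> \<and> \<bar>M $$ (i,j)\<bar> \<le> h"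
  shows "det M \<in> \<int> \<and> \<bar>det M\<bar> \<le> fact n * h ^ n"
proof -
  have h0: "0 \<le> h" if "0 < n" using ent[of 0 0] that by auto
  have dd: "det M = (\<Sum>p\<in>{p. p permutes {0..<n}}. signof p * (\<Prod>i = 0..<n. M $$ (i, p i)))"
    using det_def'[OF M] .
  have pin: "p i < n" if "p permutes {0..<n}" "i < n" for p i
    using that permutes_in_image by fastforce
  have "det M \<in> \<int>" unfolding dd
    by (intro Ints_sum Ints_mult Ints_prod) (auto simp: pin ent)
  moreover have "\<bar>det M\<bar> \<le> fact n * h ^ n"
  proof -
    have "\<bar>det M\<bar> \<le> (\<Sum>p\<in>{p. p permutes {0..<n}}. \<bar>signof p * (\<Prod>i = 0..<n. M $$ (i, p i))\<bar>)"
      unfolding dd by (rule sum_abs)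
    also have "\<dots> \<le> (\<Sum>p\<in>{p. p permutes {0..<n}}. h ^ n)"
    proof (rule sum_mono)
      fix p assume p: "p \<in> {p. p permutes {0..<n}}"
      have s: "\<bar>(signof p :: real)\<bar> = 1" by (simp add: sign_def)
      have "\<bar>signof p * (\<Prod>i = 0..<n. M $$ (i, p i))\<bar> = (\<Prod>i = 0..<n. \<bar>M $$ (i, p i)\<bar>)"
        by (simp add: abs_mult s abs_prod)
      also have "\<dots> \<le> (\<Prod>i = 0..<n. h)"
        by (rule prod_mono) (use p pin ent in auto)
      finally show "\<bar>signof p * (\<Prod>i = 0..<n. M $$ (i, p i))\<bar> \<le> h ^ n" by simp
    qed
    also have "\<dots> = fact n * h ^ n"
      by (simp add: card_permutations)
    finally show ?thesis .
  qed
  ultimately show ?thesis by blast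
qed


definition dotp :: "nat \<Rightarrow> (nat \<Rightarrow> int) \<Rightarrow> (nat \<Rightarrow> real) \<Rightarrow> real" where
  "dotp n a x = (\<Sum>k<n. real_of_int (a k) * x k)"

lemma aff_dotp: "aff_eval n a b x = dotp n a x + real_of_int b"
  by (simp add: aff_eval_def dotp_def)

definition PS :: "nat \<Rightarrow> nat \<Rightarrow> (nat \<Rightarrow> nat \<Rightarrow> int) \<Rightarrow> (nat \<Rightarrow> int) \<Rightarrow> (nat \<Rightarrow> real) set" where
  "PS n m A B = {x. (\<forall>i\<ge>n. x i = 0) \<and> (\<forall>i<m. aff_eval n (A i) (B i) x \<le> 0)}"

locale LP =
  fixes n m :: nat and A :: "nat \<Rightarrow> nat \<Rightarrow> int" and B :: "nat \<Rightarrow> int" and H :: nat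
  assumes Abnd: "\<And>i k. i < m \<Longrightarrow> k < n \<Longrightarrow> \<bar>A i k\<bar> \<le> int H"
    and Bbnd: "\<And>i. i < m \<Longrightarrow> \<bar>B i\<bar> \<le> int H"
    and bdd: "\<exists>M. \<forall>x\<in>PS n m A B. \<forall>i<n. \<bar>x i\<bar> \<le> M"
begin

abbreviation "P \<equiv> PS n m A B"

definition act :: "(nat \<Rightarrow> real) \<Rightarrow> nat \<Rightarrow> bool" where
  "act x i \<longleftrightarrow> aff_eval n (A i) (B i) x = 0"

definition indep :: "nat list \<Rightarrow> bool" where
  "indep c \<longleftrightarrow> set c \<subseteq> {..<m} \<and> (\<forall>w::nat \<Rightarrow> real. (\<forall>k<n. (\<Sum>p<length c. w p * of_int (A (c!p) k)) = 0)
      \<longrightarrow> (\<forall>p<length c. w p = 0))"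

definition Bn :: nat where "Bn = fact n * (H+1)^n"

definition good :: "(nat \<Rightarrow> real) \<Rightarrow> bool" where
  "good v \<longleftrightarrow> (\<forall>k\<ge>n. v k = 0) \<and> (\<exists>D::int. 1 \<le> D \<and> D \<le> int Bn \<and>
      (\<forall>k<n. \<exists>w::int. v k * of_int D = of_int w \<and> \<bar>w\<bar> \<le> int Bn))"

lemma Bn_ge: "fact n * real H ^ n \<le> real Bn"
proof -
  have "fact n * real H ^ n \<le> fact n * (real H + 1) ^ n"
    by (intro mult_left_mono power_mono) auto
  thus ?thesis by (simp add: Bn_def add.commute)
qed

lemma vertex_good:
  assumes x: "x \<in> P" and ind: "indep c" and len: "length c = n"
    and ac: "\<And>p. p < n \<Longrightarrow> act x (c!p)"
  shows "good x"
proof -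
  define Mr where "Mr = mat n n (\<lambda>(p,k). real_of_int (A (c!p) k))"
  have Mr: "Mr \<in> carrier_mat n n" by (simp add: Mr_def)
  have cm: "c!p < m" if "p < n" for p proof -
    have "c!p \<in> set c" using that len by simp
    thus ?thesis using ind unfolding indep_def by auto
  qed
  have dnz: "det Mr \<noteq> 0"
  proof
    assume "det Mr = 0"
    hence "det (transpose_mat Mr) = 0" using det_transpose[OF Mr] by simp
    then obtain u where u: "u \<in> carrier_vec n" "u \<noteq> 0\<^sub>v n" "transpose_mat Mr *\<^sub>v u = 0\<^sub>v n"
      using det_0_iff_vec_prod_zero[of "transpose_mat Mr" n] Mr by auto
    have "\<forall>k<n. (\<Sum>p<length c. u $ p * of_int (A (c!p) k)) = 0"
    proof (intro allI impI)
      fix k assume k: "k < n"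
      have e: "(transpose_mat Mr *\<^sub>v u) $ k = 0" using u k by simp
      have "(transpose_mat Mr *\<^sub>v u) $ k = (\<Sum>p\<in>{0..<n}. Mr $$ (p, k) * u $ p)"
        using k u(1) Mr by (auto simp: scalar_prod_def intro!: sum.cong)
      hence "(\<Sum>p\<in>{0..<n}. Mr $$ (p, k) * u $ p) = 0" using e by simp
      thus "(\<Sum>p<length c. u $ p * of_int (A (c!p) k)) = 0"
        using k len by (simp add: Mr_def lessThan_atLeast0 mult.commute)
    qed
    hence "\<forall>p<n. u $ p = 0" using ind len unfolding indep_def by auto
    hence "u = 0\<^sub>v n" using u by (intro eq_vecI) auto
    with u show False by simp
  qed
  define xv where "xv = vec n x"
  have xv: "xv \<in> carrier_vec n" by (simp add: xv_def)
  have Mx: "Mr *\<^sub>v xv = vec n (\<lambda>p. - real_of_int (B (c!p)))"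
  proof (rule eq_vecI)
    fix p assume "p < dim_vec (vec n (\<lambda>p. - real_of_int (B (c!p))))"
    hence p: "p < n" by simp
    have "(Mr *\<^sub>v xv) $ p = (\<Sum>k\<in>{0..<n}. real_of_int (A (c!p) k) * x k)"
      using p by (simp add: Mr_def xv_def scalar_prod_def)
    also have "\<dots> = dotp n (A (c!p)) x" by (simp add: dotp_def lessThan_atLeast0)
    also have "\<dots> = - real_of_int (B (c!p))" using ac[OF p] by (simp add: act_def aff_dotp)
    finally show "(Mr *\<^sub>v xv) $ p = vec n (\<lambda>p. - real_of_int (B (c!p))) $ p" using p by simp
  qed (simp add: Mr_def)
  have entb: "\<And>i j. i < n \<Longrightarrow> j < n \<Longrightarrow> Mr $$ (i,j) \<in> \<int> \<and> \<bar>Mr $$ (i,j)\<bar> \<le> real H"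
  proof -
    fix i j assume "i < n" "j < n"
    thus "Mr $$ (i,j) \<in> \<int> \<and> \<bar>Mr $$ (i,j)\<bar> \<le> real H"
      using Abnd[OF cm[of i], of j] by (simp add: Mr_def)
  qed
  from det_bound[OF Mr entb] Bn_ge have dM: "det Mr \<in> \<int>" "\<bar>det Mr\<bar> \<le> real Bn" by auto
  then obtain DI where DI: "det Mr = of_int DI" by (auto elim: Ints_cases)
  have DI0: "DI \<noteq> 0" using dnz DI by auto
  have DIb: "\<bar>DI\<bar> \<le> int Bn" using dM(2) DI
    by (metis of_int_abs of_int_le_iff of_int_of_nat_eq)
  have num: "\<exists>w::int. x k * of_int \<bar>DI\<bar> = of_int w \<and> \<bar>w\<bar> \<le> int Bn" if k: "k < n" for k
  proof -
    define Rk where "Rk = replace_col Mr (Mr *\<^sub>v xv) k"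
    have Rk: "Rk \<in> carrier_mat n n" by (simp add: Rk_def replace_col_def Mr_def)
    have eR: "\<And>i j. i < n \<Longrightarrow> j < n \<Longrightarrow> Rk $$ (i,j) \<in> \<int> \<and> \<bar>Rk $$ (i,j)\<bar> \<le> real H"
    proof -
      fix i j assume ij: "i < n" "j < n"
      have "\<bar>real_of_int (B (c!i))\<bar> \<le> real H" using Bbnd[OF cm[OF ij(1)]]
        by (metis of_int_abs of_int_le_iff of_int_of_nat_eq)
      thus "Rk $$ (i,j) \<in> \<int> \<and> \<bar>Rk $$ (i,j)\<bar> \<le> real H"
        using ij entb[OF ij] using Mr by (auto simp: Rk_def replace_col_def Mx)
    qed
    from det_bound[OF Rk eR] Bn_ge have dR: "det Rk \<in> \<int>" "\<bar>det Rk\<bar> \<le> real Bn" by auto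
    then obtain W where W: "det Rk = of_int W" by (auto elim: Ints_cases)
    have cr: "det Rk = x k * det Mr"
      using cramer_lemma_mat[OF Mr xv k] k by (simp add: Rk_def xv_def)
    have "x k * of_int \<bar>DI\<bar> = of_int (sgn DI * W)"
    proof -
      have "x k * of_int DI = of_int W" using cr W DI by simp
      hence "x k * of_int DI * of_int (sgn DI) = of_int W * of_int (sgn DI)" by simp
      thus ?thesis by (simp add: abs_sgn mult.commute mult.left_commute)
    qed
    moreover have "\<bar>sgn DI * W\<bar> \<le> int Bn" using dR(2) W DI0
      by (simp add: abs_mult abs_sgn_eq)
    ultimately show ?thesis by blast
  qed
  show ?thesis unfolding good_def
    using x DI0 DIb num by (intro conjI exI[of _ "\<bar>DI\<bar>"]) (auto simp: PS_def)
qed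

end



lemma aff_move: "aff_eval n a b (\<lambda>k. x k + t * u k) = aff_eval n a b x + t * dotp n a u"
  by (simp add: aff_eval_def dotp_def sum.distrib algebra_simps sum_distrib_left)

lemma dotp_neg: "dotp n a (\<lambda>k. - u k) = - dotp n a u"
  by (simp add: dotp_def sum_negf)

lemma aff_diff: "aff_eval n a b x - aff_eval n a b y = dotp n a (\<lambda>k. x k - y k)"
  by (simp add: aff_eval_def dotp_def sum_subtractf algebra_simps)

context LP begin

lemma ext_dir:
  assumes L: "length c < n"
  shows "\<exists>u. (\<forall>k\<ge>n. u k = 0) \<and> (\<exists>k<n. u k \<noteq> 0) \<and> (\<forall>p<length c. dotp n (A (c!p)) u = 0)"
proof -
  define Mz where "Mz = mat n n (\<lambda>(p,k). if p < length c then real_of_int (A (c!p) k) else 0)"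
  have Mz: "Mz \<in> carrier_mat n n" by (simp add: Mz_def)
  have "det Mz = 0"
  proof -
    have "det Mz = (\<Sum>p\<in>{p. p permutes {0..<n}}. signof p * (\<Prod>i = 0..<n. Mz $$ (i, p i)))"
      using det_def'[OF Mz] .
    also have "\<dots> = 0"
    proof (rule sum.neutral, intro ballI)
      fix p assume p: "p \<in> {p. p permutes {0..<n}}"
      have pin: "p (n - 1) < n" using p L permutes_in_image[of p "{0..<n}" "n-1"] by auto
      have "(\<Prod>i = 0..<n. Mz $$ (i, p i)) = 0"
        by (rule prod_zero) (use L pin in \<open>auto simp: Mz_def intro!: bexI[of _ "n - 1"]\<close>)
      thus "signof p * (\<Prod>i = 0..<n. Mz $$ (i, p i)) = 0" by simp
    qed
    finally show ?thesis .
  qed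
  then obtain v where v: "v \<in> carrier_vec n" "v \<noteq> 0\<^sub>v n" "Mz *\<^sub>v v = 0\<^sub>v n"
    using det_0_iff_vec_prod_zero[OF Mz] by auto
  define u where "u = (\<lambda>k. if k < n then v $ k else 0)"
  have "\<exists>k<n. u k \<noteq> 0"
  proof (rule ccontr)
    assume "\<not> ?thesis"
    hence "v = 0\<^sub>v n" using v(1) by (intro eq_vecI) (auto simp: u_def)
    with v(2) show False by simp
  qed
  moreover have "\<forall>p<length c. dotp n (A (c!p)) u = 0"
  proof (intro allI impI)
    fix p assume p: "p < length c"
    have e: "(Mz *\<^sub>v v) $ p = 0" using v(3) p L by simp
    have "(Mz *\<^sub>v v) $ p = (\<Sum>k\<in>{0..<n}. real_of_int (A (c!p) k) * v $ k)"
      using p L v(1) by (auto simp: Mz_def scalar_prod_def intro!: sum.cong)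
    also have "\<dots> = dotp n (A (c!p)) u"
      by (simp add: dotp_def u_def lessThan_atLeast0)
    finally show "dotp n (A (c!p)) u = 0" using e by simp
  qed
  ultimately show ?thesis by (intro exI[of _ u]) (auto simp: u_def)
qed

lemma indep_snoc:
  assumes ind: "indep c" and i0: "i0 < m" and orth: "\<forall>p<length c. dotp n (A (c!p)) u = 0"
    and nz: "dotp n (A i0) u \<noteq> 0"
  shows "indep (c @ [i0])"
  unfolding indep_def
proof (intro conjI)
  show "set (c @ [i0]) \<subseteq> {..<m}" using ind i0 by (auto simp: indep_def)
  show "\<forall>w::nat \<Rightarrow> real. (\<forall>k<n. (\<Sum>p<length (c @ [i0]). w p * of_int (A ((c @ [i0]) ! p) k)) = 0) \<longrightarrow> (\<forall>p<length (c @ [i0]). w p = 0)"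
  proof (rule allI, rule impI)
  fix w :: "nat \<Rightarrow> real"
  assume h: "\<forall>k<n. (\<Sum>p<length (c @ [i0]). w p * of_int (A ((c @ [i0]) ! p) k)) = 0"
  let ?L = "length c"
  let ?a = "\<lambda>p. A ((c @ [i0]) ! p)"
  have h': "(\<Sum>p<Suc ?L. w p * of_int (?a p k)) = 0" if "k < n" for k
    using h that by (simp del: sum.lessThan_Suc)
  have "0 = (\<Sum>k<n. u k * (\<Sum>p<Suc ?L. w p * of_int (?a p k)))"
    by (rule sum.neutral[symmetric]) (simp add: h' del: sum.lessThan_Suc)
  also have "\<dots> = (\<Sum>k<n. \<Sum>p<Suc ?L. w p * (of_int (?a p k) * u k))"
    by (rule sum.cong[OF refl], unfold sum_distrib_left, rule sum.cong[OF refl]) (simp add: mult_ac)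
  also have "\<dots> = (\<Sum>p<Suc ?L. \<Sum>k<n. w p * (of_int (?a p k) * u k))"
    by (rule sum.swap)
  also have "\<dots> = (\<Sum>p<Suc ?L. w p * dotp n (?a p) u)"
    by (simp add: dotp_def sum_distrib_left)
  also have "\<dots> = w ?L * dotp n (A i0) u"
    using orth by (simp add: nth_append)
  finally have wL: "w ?L = 0" using nz by simp
  have "\<forall>k<n. (\<Sum>p<?L. w p * of_int (A (c ! p) k)) = 0"
  proof (intro allI impI)
    fix k assume "k < n"
    with h have "(\<Sum>p<Suc ?L. w p * of_int (?a p k)) = 0" by simp
    thus "(\<Sum>p<?L. w p * of_int (A (c ! p) k)) = 0" using wL by (simp add: nth_append)
  qed
  hence "\<forall>p<?L. w p = 0" using ind by (auto simp: indep_def)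
  thus "\<forall>p<length (c @ [i0]). w p = 0" using wL by (auto simp: less_Suc_eq)
  qed
qed

lemma indep_take:
  assumes ind: "indep c" shows "indep (take j c)"
  unfolding indep_def
proof (intro conjI)
  show "set (take j c) \<subseteq> {..<m}" using ind set_take_subset[of j c] by (auto simp: indep_def)
  show "\<forall>w::nat \<Rightarrow> real. (\<forall>k<n. (\<Sum>p<length (take j c). w p * of_int (A (take j c ! p) k)) = 0) \<longrightarrow> (\<forall>p<length (take j c). w p = 0)"
  proof (rule allI, rule impI)
  fix w :: "nat \<Rightarrow> real"
  let ?L = "length (take j c)"
  assume h: "\<forall>k<n. (\<Sum>p<?L. w p * of_int (A (take j c ! p) k)) = 0"
  define w' where "w' = (\<lambda>p. if p < ?L then w p else 0)"
  have "\<forall>k<n. (\<Sum>p<length c. w' p * of_int (A (c ! p) k)) = 0"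
  proof (intro allI impI)
    fix k assume k: "k < n"
    have "(\<Sum>p<length c. w' p * of_int (A (c ! p) k)) = (\<Sum>p<?L. w' p * of_int (A (c ! p) k))"
      by (rule sum.mono_neutral_right) (auto simp: w'_def)
    also have "\<dots> = (\<Sum>p<?L. w p * of_int (A (take j c ! p) k))"
      by (rule sum.cong) (auto simp: w'_def)
    finally show "(\<Sum>p<length c. w' p * of_int (A (c ! p) k)) = 0" using h k by simp
  qed
  hence "\<forall>p<length c. w' p = 0" using ind by (auto simp: indep_def)
  thus "\<forall>p<?L. w p = 0" by (auto simp: w'_def)
  qed
qed

lemma exit_pt:
  assumes x: "x \<in> P" and u: "\<forall>k\<ge>n. u k = 0" and i1: "i1 < m" "dotp n (A i1) u > 0"
  shows "\<exists>t\<ge>0. \<exists>i0<m. (\<lambda>k. x k + t * u k) \<in> P \<and> act (\<lambda>k. x k + t * u k) i0 \<and> dotp n (A i0) u > 0"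
proof -
  define I where "I = {i. i < m \<and> dotp n (A i) u > 0}"
  define r where "r = (\<lambda>i. - aff_eval n (A i) (B i) x / dotp n (A i) u)"
  have fI: "finite I" by (simp add: I_def)
  have neI: "I \<noteq> {}" using i1 by (auto simp: I_def)
  define t where "t = Min (r ` I)"
  have "t \<in> r ` I" using Min_in[of "r ` I"] fI neI by (simp add: t_def)
  then obtain i0 where i0: "i0 \<in> I" "t = r i0" by auto
  have tle: "t \<le> r i" if "i \<in> I" for i using fI that by (simp add: t_def)
  have xa: "aff_eval n (A i) (B i) x \<le> 0" if "i < m" for i using x that by (simp add: PS_def)
  have t0: "t \<ge> 0" using i0 xa[of i0] by (auto simp: I_def r_def divide_nonpos_pos)
  have "(\<lambda>k. x k + t * u k) \<in> P"
    unfolding PS_def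
  proof (intro CollectI conjI allI impI)
    fix i assume "n \<le> i" thus "x i + t * u i = 0" using x u by (simp add: PS_def)
  next
    fix i assume im: "i < m"
    show "aff_eval n (A i) (B i) (\<lambda>k. x k + t * u k) \<le> 0"
    proof (cases "dotp n (A i) u > 0")
      case True
      hence "i \<in> I" using im by (simp add: I_def)
      hence "t * dotp n (A i) u \<le> r i * dotp n (A i) u"
        using tle True by (intro mult_right_mono) auto
      also have "\<dots> = - aff_eval n (A i) (B i) x" using True by (simp add: r_def)
      finally show ?thesis by (simp add: aff_move)
    next
      case False
      hence "t * dotp n (A i) u \<le> 0" using t0 by (simp add: mult_nonneg_nonpos)
      thus ?thesis using xa[OF im] by (simp add: aff_move)
    qed
  qed
  moreover have "act (\<lambda>k. x k + t * u k) i0"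
    unfolding act_def aff_move using i0 by (simp add: r_def I_def)
  ultimately show ?thesis using t0 i0 by (auto simp: I_def)
qed

lemma unb:
  assumes x: "x \<in> P" and u: "\<forall>k\<ge>n. u k = 0" and k0: "k0 < n" "u k0 \<noteq> 0"
    and neg: "\<forall>i<m. dotp n (A i) u \<le> 0"
  shows False
proof -
  obtain M where M: "\<forall>x\<in>P. \<forall>i<n. \<bar>x i\<bar> \<le> M" using bdd by blast
  have Mx: "\<bar>x k0\<bar> \<le> M" using bspec[OF M x] k0 by simp
  define t where "t = (M + \<bar>x k0\<bar> + 1) / \<bar>u k0\<bar>"
  have t0: "t \<ge> 0" using Mx by (simp add: t_def)
  have "(\<lambda>k. x k + t * u k) \<in> P"
    unfolding PS_def
  proof (intro CollectI conjI allI impI)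
    fix i assume "n \<le> i" thus "x i + t * u i = 0" using x u by (simp add: PS_def)
  next
    fix i assume im: "i < m"
    have "t * dotp n (A i) u \<le> 0" using t0 neg im mult_nonneg_nonpos by blast
    moreover have "aff_eval n (A i) (B i) x \<le> 0" using x im by (simp add: PS_def)
    ultimately show "aff_eval n (A i) (B i) (\<lambda>k. x k + t * u k) \<le> 0" by (simp add: aff_move)
  qed
  hence yP: "(\<lambda>k. x k + t * u k) \<in> P" .
  have "\<forall>i<n. \<bar>x i + t * u i\<bar> \<le> M" using bspec[OF M yP] by simp
  hence "\<bar>x k0 + t * u k0\<bar> \<le> M" using k0 by simp
  moreover have "\<bar>t * u k0\<bar> = t * \<bar>u k0\<bar>" using t0 by (simp add: abs_mult)
  moreover have "t * \<bar>u k0\<bar> = M + \<bar>x k0\<bar> + 1" using k0 by (simp add: t_def)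
  moreover have "\<bar>t * u k0\<bar> \<le> \<bar>x k0 + t * u k0\<bar> + \<bar>x k0\<bar>"
    using abs_triangle_ineq4[of "x k0 + t * u k0" "x k0"] by simp
  ultimately show False by linarith
qed

lemma full_good:
  assumes x: "x \<in> P" and ind: "indep c" and L: "n \<le> length c"
    and ac: "\<forall>p<length c. act x (c!p)"
  shows "good x"
proof -
  have "indep (take n c)" by (rule indep_take[OF ind])
  moreover have "length (take n c) = n" using L by simp
  moreover have "\<And>p. p < n \<Longrightarrow> act x (take n c ! p)" using ac L by simp
  ultimately show ?thesis using vertex_good[OF x] by blast
qed

lemma orth_dir:
  assumes x: "x \<in> P" and u: "\<forall>k\<ge>n. u k = 0" and k0: "k0 < n" "u k0 \<noteq> 0"
  shows "\<exists>i1<m. dotp n (A i1) u > 0"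
proof (rule ccontr)
  assume "\<not> ?thesis"
  hence "\<forall>i<m. dotp n (A i) u \<le> 0" using not_less by blast
  thus False using unb[OF x u k0] by blast
qed

lemma vtx:
  "x \<in> P \<Longrightarrow> indep c \<Longrightarrow> \<forall>p<length c. act x (c!p) \<Longrightarrow>
    \<exists>v. v \<in> P \<and> good v \<and> (\<forall>p<length c. act v (c!p))"
proof (induction "n - length c" arbitrary: c x rule: less_induct)
  case less
  show ?case
  proof (cases "length c < n")
    case False
    hence "good x" using full_good[OF less.prems(1,2) _ less.prems(3)] by simp
    thus ?thesis using less.prems by blast
  next
    case True
    obtain u where u: "\<forall>k\<ge>n. u k = 0" "\<exists>k<n. u k \<noteq> 0" "\<forall>p<length c. dotp n (A (c!p)) u = 0"
      using ext_dir[OF True] by blast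
    obtain k0 where k0: "k0 < n" "u k0 \<noteq> 0" using u(2) by blast
    have "\<exists>u'. (\<forall>k\<ge>n. u' k = 0) \<and> (\<forall>p<length c. dotp n (A (c!p)) u' = 0) \<and> (\<exists>i1<m. dotp n (A i1) u' > 0)"
    proof (cases "\<exists>i1<m. dotp n (A i1) u > 0")
      case True thus ?thesis using u by blast
    next
      case False
      have "\<exists>i1<m. dotp n (A i1) (\<lambda>k. - u k) > 0"
        by (rule orth_dir[OF less.prems(1), of _ k0]) (use u k0 in auto)
      thus ?thesis using u by (intro exI[of _ "\<lambda>k. - u k"]) (auto simp: dotp_neg)
    qed
    then obtain u' i1 where u': "\<forall>k\<ge>n. u' k = 0" "\<forall>p<length c. dotp n (A (c!p)) u' = 0"
      "i1 < m" "dotp n (A i1) u' > 0" by blast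
    obtain t i0 where t: "t \<ge> 0" "i0 < m" "(\<lambda>k. x k + t * u' k) \<in> P"
      "act (\<lambda>k. x k + t * u' k) i0" "dotp n (A i0) u' > 0"
      using exit_pt[OF less.prems(1) u'(1) u'(3,4)] by blast
    have ind': "indep (c @ [i0])" using indep_snoc[OF less.prems(2) t(2) u'(2)] t(5) by simp
    have ac': "\<forall>p<length (c @ [i0]). act (\<lambda>k. x k + t * u' k) ((c @ [i0]) ! p)"
    proof (intro allI impI)
      fix p assume "p < length (c @ [i0])"
      hence "p < length c \<or> p = length c" by auto
      thus "act (\<lambda>k. x k + t * u' k) ((c @ [i0]) ! p)"
      proof
        assume p: "p < length c"
        thus ?thesis using less.prems(3) u'(2) by (simp add: act_def aff_move nth_append)
      qed (use t(4) in simp)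
    qed
    have lt: "n - length (c @ [i0]) < n - length c" using True by simp
    obtain v where v: "v \<in> P" "good v" "\<forall>p<length (c @ [i0]). act v ((c @ [i0]) ! p)"
      using less.hyps[OF lt t(3) ind' ac'] by blast
    have "\<forall>p<length c. act v (c!p)"
    proof (intro allI impI)
      fix p assume "p < length c"
      thus "act v (c!p)" using v(3)[rule_format, of p] by (simp add: nth_append)
    qed
    thus ?thesis using v by blast
  qed
qed

lemma carath:
  "x \<in> P \<Longrightarrow> indep c \<Longrightarrow> \<forall>p<length c. act x (c!p) \<Longrightarrow>
    \<exists>K lam v. K \<le> n - length c \<and> (\<forall>t\<le>K. 0 \<le> lam t \<and> v t \<in> P \<and> good (v t)) \<and>
      (\<Sum>t\<le>K. lam t) = 1 \<and> (\<forall>k. x k = (\<Sum>t\<le>K. lam t * v t k))"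
proof (induction "n - length c" arbitrary: c x rule: less_induct)
  case less
  have triv: ?case if "good x"
    using that less.prems(1)
    by (intro exI[of _ 0] exI[of _ "\<lambda>_. 1"] exI[of _ "\<lambda>_. x"]) auto
  show ?case
  proof (cases "length c < n")
    case False
    thus ?thesis using full_good[OF less.prems(1,2) _ less.prems(3)] triv by simp
  next
    case True
    obtain v0 where v0: "v0 \<in> P" "good v0" "\<forall>p<length c. act v0 (c!p)"
      using vtx[OF less.prems] by blast
    show ?thesis
    proof (cases "\<forall>k<n. x k = v0 k")
      case True
      have "x = v0"
      proof
        fix k show "x k = v0 k"
          using True less.prems(1) v0(1) by (cases "k < n") (auto simp: PS_def)
      qed
      thus ?thesis using triv v0(2) by simp
    next
      case False
      then obtain k0 where k0: "k0 < n" "x k0 \<noteq> v0 k0" by blast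
      define dv where "dv = (\<lambda>k. x k - v0 k)"
      have dvs: "\<forall>k\<ge>n. dv k = 0" using less.prems(1) v0(1) by (simp add: dv_def PS_def)
      have dvo: "\<forall>p<length c. dotp n (A (c!p)) dv = 0"
      proof (intro allI impI)
        fix p assume p: "p < length c"
        have "dotp n (A (c!p)) dv = aff_eval n (A (c!p)) (B (c!p)) x - aff_eval n (A (c!p)) (B (c!p)) v0"
          by (simp add: aff_diff dv_def)
        thus "dotp n (A (c!p)) dv = 0" using less.prems(3) v0(3) p by (simp add: act_def)
      qed
      obtain i1 where i1: "i1 < m" "dotp n (A i1) dv > 0"
        using orth_dir[OF less.prems(1) dvs k0(1)] k0(2) by (auto simp: dv_def)
      obtain t i0 where t: "t \<ge> 0" "i0 < m" "(\<lambda>k. x k + t * dv k) \<in> P"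
        "act (\<lambda>k. x k + t * dv k) i0" "dotp n (A i0) dv > 0"
        using exit_pt[OF less.prems(1) dvs i1] by blast
      define y where "y = (\<lambda>k. x k + t * dv k)"
      have ind': "indep (c @ [i0])" using indep_snoc[OF less.prems(2) t(2) dvo] t(5) by simp
      have ac': "\<forall>p<length (c @ [i0]). act y ((c @ [i0]) ! p)"
      proof (intro allI impI)
        fix p assume "p < length (c @ [i0])"
        hence "p < length c \<or> p = length c" by auto
        thus "act y ((c @ [i0]) ! p)"
        proof
          assume p: "p < length c"
          thus ?thesis using less.prems(3) dvo by (simp add: y_def act_def aff_move nth_append)
        qed (use t(4) in \<open>simp add: y_def\<close>)
      qed
      have lt: "n - length (c @ [i0]) < n - length c" using True by simp
      obtain K lam v where IH: "K \<le> n - length (c @ [i0])" "\<forall>s\<le>K. 0 \<le> lam s \<and> v s \<in> P \<and> good (v s)"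
        "(\<Sum>s\<le>K. lam s) = 1" "\<forall>k. y k = (\<Sum>s\<le>K. lam s * v s k)"
        using less.hyps[OF lt _ ind' ac'] t(3) unfolding y_def by blast
      define lam' where "lam' = (\<lambda>s. case s of 0 \<Rightarrow> t / (1 + t) | Suc s' \<Rightarrow> lam s' / (1 + t))"
      define v' where "v' = (\<lambda>s. case s of 0 \<Rightarrow> v0 | Suc s' \<Rightarrow> v s')"
      have t1: "1 + t > 0" using t(1) by simp
      have "Suc K \<le> n - length c" using IH(1) True by simp
      moreover have "\<forall>s\<le>Suc K. 0 \<le> lam' s \<and> v' s \<in> P \<and> good (v' s)"
      proof (intro allI impI)
        fix s assume "s \<le> Suc K"
        thus "0 \<le> lam' s \<and> v' s \<in> P \<and> good (v' s)"
          using IH(2) v0 t(1) t1 by (cases s) (auto simp: lam'_def v'_def)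
      qed
      moreover have "(\<Sum>s\<le>Suc K. lam' s) = 1"
      proof -
        have "(\<Sum>s\<le>Suc K. lam' s) = t / (1 + t) + (\<Sum>s\<le>K. lam s) / (1 + t)"
          by (subst sum.atMost_Suc_shift) (simp add: lam'_def sum_divide_distrib)
        also have "\<dots> = 1" using IH(3) t1 by (simp add: field_simps)
        finally show ?thesis .
      qed
      moreover have "\<forall>k. x k = (\<Sum>s\<le>Suc K. lam' s * v' s k)"
      proof
        fix k
        have "(\<Sum>s\<le>Suc K. lam' s * v' s k) = t / (1 + t) * v0 k + (\<Sum>s\<le>K. lam s * v s k) / (1 + t)"
          by (subst sum.atMost_Suc_shift) (simp add: lam'_def v'_def sum_divide_distrib)
        also have "\<dots> = (t * v0 k + y k) / (1 + t)" using IH(4) by (simp add: add_divide_distrib)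
        also have "\<dots> = x k" using t1 by (simp add: y_def dv_def field_simps)
        finally show "x k = (\<Sum>s\<le>Suc K. lam' s * v' s k)" by simp
      qed
      ultimately show ?thesis by blast
    qed
  qed
qed

end



lemma pow_diff_bound:
  fixes x y M e :: real
  assumes "\<bar>x\<bar> \<le> M" "\<bar>y\<bar> \<le> M" "1 \<le> M" "\<bar>x - y\<bar> \<le> e"
  shows "\<bar>x ^ a - y ^ a\<bar> \<le> real a * M ^ a * e"
proof (induction a)
  case 0 thus ?case by simp
next
  case (Suc a)
  have e0: "0 \<le> e" using assms(4) by linarith
  have "x ^ Suc a - y ^ Suc a = x * (x ^ a - y ^ a) + y ^ a * (x - y)" by (simp add: algebra_simps)
  hence "\<bar>x ^ Suc a - y ^ Suc a\<bar> = \<bar>x * (x ^ a - y ^ a) + y ^ a * (x - y)\<bar>" by simp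
  also have "\<dots> \<le> \<bar>x * (x ^ a - y ^ a)\<bar> + \<bar>y ^ a * (x - y)\<bar>" by (rule abs_triangle_ineq)
  also have "\<dots> = \<bar>x\<bar> * \<bar>x ^ a - y ^ a\<bar> + \<bar>y\<bar> ^ a * \<bar>x - y\<bar>" by (simp add: abs_mult power_abs)
  also have "\<dots> \<le> M * (real a * M ^ a * e) + M ^ a * e"
    by (intro add_mono mult_mono power_mono Suc.IH) (use assms e0 in auto)
  also have "M ^ a * e \<le> M ^ Suc a * e"
    using assms(3) e0 by (intro mult_right_mono) (auto simp: power_increasing)
  hence "M * (real a * M ^ a * e) + M ^ a * e \<le> M * (real a * M ^ a * e) + M ^ Suc a * e" by simp
  also have "\<dots> = real (Suc a) * M ^ Suc a * e" by (simp add: algebra_simps)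
  finally show ?case .
qed

lemma prod_diff_bound:
  fixes x y :: "nat \<Rightarrow> real" and M e :: real
  assumes b: "\<And>i. i < n \<Longrightarrow> \<bar>x i\<bar> \<le> M \<and> \<bar>y i\<bar> \<le> M \<and> \<bar>x i - y i\<bar> \<le> e" and M: "1 \<le> M" and e0: "0 \<le> e"
  shows "\<bar>(\<Prod>i<n. x i ^ al i) - (\<Prod>i<n. y i ^ al i)\<bar> \<le> real (\<Sum>i<n. al i) * M ^ (\<Sum>i<n. al i) * e"
  using b
proof (induction n)
  case 0 thus ?case by simp
next
  case (Suc n)
  let ?X = "\<Prod>i<n. x i ^ al i" and ?Y = "\<Prod>i<n. y i ^ al i" and ?s = "\<Sum>i<n. al i" and ?a = "al n"
  have bn: "\<bar>x n\<bar> \<le> M" "\<bar>y n\<bar> \<le> M" "\<bar>x n - y n\<bar> \<le> e" using Suc.prems[of n] by auto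
  have IH: "\<bar>?X - ?Y\<bar> \<le> real ?s * M ^ ?s * e" using Suc.IH Suc.prems by simp
  have pb: "\<bar>\<Prod>i<n. z i ^ al i\<bar> \<le> M ^ ?s" if "\<And>i. i < n \<Longrightarrow> \<bar>z i\<bar> \<le> M" for z :: "nat \<Rightarrow> real"
  proof -
    have "\<bar>\<Prod>i<n. z i ^ al i\<bar> = (\<Prod>i<n. \<bar>z i\<bar> ^ al i)" by (simp add: abs_prod power_abs)
    also have "\<dots> \<le> (\<Prod>i<n. M ^ al i)" by (intro prod_mono conjI power_mono) (use that in auto)
    also have "\<dots> = M ^ ?s" by (simp add: power_sum)
    finally show ?thesis .
  qed
  have Xb: "\<bar>?X\<bar> \<le> M ^ ?s" by (rule pb) (use Suc.prems in auto)
  have Yb: "\<bar>y n ^ ?a\<bar> \<le> M ^ ?a" using bn by (simp add: power_abs power_mono)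
  have pd: "\<bar>x n ^ ?a - y n ^ ?a\<bar> \<le> real ?a * M ^ ?a * e" by (rule pow_diff_bound) (use bn M in auto)
  have "(\<Prod>i<Suc n. x i ^ al i) - (\<Prod>i<Suc n. y i ^ al i) = ?X * (x n ^ ?a - y n ^ ?a) + y n ^ ?a * (?X - ?Y)"
    by (simp add: algebra_simps)
  hence "\<bar>(\<Prod>i<Suc n. x i ^ al i) - (\<Prod>i<Suc n. y i ^ al i)\<bar> = \<bar>?X * (x n ^ ?a - y n ^ ?a) + y n ^ ?a * (?X - ?Y)\<bar>" by simp
  also have "\<dots> \<le> \<bar>?X * (x n ^ ?a - y n ^ ?a)\<bar> + \<bar>y n ^ ?a * (?X - ?Y)\<bar>" by (rule abs_triangle_ineq)
  also have "\<dots> = \<bar>?X\<bar> * \<bar>x n ^ ?a - y n ^ ?a\<bar> + \<bar>y n ^ ?a\<bar> * \<bar>?X - ?Y\<bar>" by (simp add: abs_mult)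
  also have "\<dots> \<le> M ^ ?s * (real ?a * M ^ ?a * e) + M ^ ?a * (real ?s * M ^ ?s * e)"
    by (intro add_mono mult_mono Xb pd Yb IH) (use M e0 in auto)
  also have "\<dots> = real (?s + ?a) * M ^ (?s + ?a) * e" by (simp add: algebra_simps power_add)
  finally show ?case by simp
qed

lemma monos_finite_card: "finite (monomials_upto n d) \<and> card (monomials_upto n d) \<le> (d+1)^n"
proof -
  let ?f = "\<lambda>\<alpha>::nat\<Rightarrow>nat. restrict \<alpha> {..<n}"
  let ?B = "PiE {..<n} (\<lambda>_. {..d})"
  have inj: "inj_on ?f (monomials_upto n d)"
  proof
    fix a b assume a: "a \<in> monomials_upto n d" and b: "b \<in> monomials_upto n d" and eq: "?f a = ?f b"
    show "a = b"
    proof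
      fix i show "a i = b i"
      proof (cases "i < n")
        case True thus ?thesis using fun_cong[OF eq, of i] by simp
      next
        case False thus ?thesis using a b by (simp add: monomials_upto_def)
      qed
    qed
  qed
  have sub: "?f ` monomials_upto n d \<subseteq> ?B"
  proof
    fix z assume "z \<in> ?f ` monomials_upto n d"
    then obtain a where a: "a \<in> monomials_upto n d" "z = ?f a" by blast
    have "a i \<le> d" if "i < n" for i
    proof -
      have "a i \<le> (\<Sum>j<n. a j)" by (rule member_le_sum) (use that in auto)
      thus ?thesis using a(1) by (simp add: monomials_upto_def)
    qed
    thus "z \<in> ?B" using a(2) by auto
  qed
  have fB: "finite ?B" by (simp add: finite_PiE)
  have cB: "card ?B = (d+1)^n" by (simp add: card_PiE)
  have fin: "finite (monomials_upto n d)"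
    using finite_imageD[OF finite_subset[OF sub fB] inj] .
  moreover have "card (monomials_upto n d) \<le> (d+1)^n"
    using card_inj_on_le[OF inj sub fB] cB by simp
  ultimately show ?thesis by blast
qed

lemma poly_lip:
  fixes x y :: "nat \<Rightarrow> real" and M e :: real and g :: "(nat \<Rightarrow> nat) \<Rightarrow> int"
  assumes b: "\<And>i. i < n \<Longrightarrow> \<bar>x i\<bar> \<le> M \<and> \<bar>y i\<bar> \<le> M \<and> \<bar>x i - y i\<bar> \<le> e" and M: "1 \<le> M" and e0: "0 \<le> e"
    and g: "\<forall>\<alpha>\<in>monomials_upto n d. \<bar>g \<alpha>\<bar> \<le> int H"
  shows "\<bar>poly_eval n d g x - poly_eval n d g y\<bar> \<le> real ((d+1)^n) * real H * real d * M ^ d * e"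
proof -
  let ?S = "monomials_upto n d"
  have fin: "finite ?S" using monos_finite_card by blast
  have "poly_eval n d g x - poly_eval n d g y =
      (\<Sum>\<alpha>\<in>?S. real_of_int (g \<alpha>) * ((\<Prod>i<n. x i ^ \<alpha> i) - (\<Prod>i<n. y i ^ \<alpha> i)))"
    by (simp add: poly_eval_def sum_subtractf algebra_simps)
  hence "\<bar>poly_eval n d g x - poly_eval n d g y\<bar> \<le>
      (\<Sum>\<alpha>\<in>?S. \<bar>real_of_int (g \<alpha>) * ((\<Prod>i<n. x i ^ \<alpha> i) - (\<Prod>i<n. y i ^ \<alpha> i))\<bar>)"
    by (simp add: sum_abs)
  also have "\<dots> \<le> (\<Sum>\<alpha>\<in>?S. real H * (real d * M ^ d * e))"
  proof (rule sum_mono)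
    fix \<alpha> assume a: "\<alpha> \<in> ?S"
    have sd: "(\<Sum>i<n. \<alpha> i) \<le> d" using a by (simp add: monomials_upto_def)
    have gb: "\<bar>real_of_int (g \<alpha>)\<bar> \<le> real H" using g a
      by (metis of_int_abs of_int_le_iff of_int_of_nat_eq)
    have "\<bar>(\<Prod>i<n. x i ^ \<alpha> i) - (\<Prod>i<n. y i ^ \<alpha> i)\<bar> \<le> real (\<Sum>i<n. \<alpha> i) * M ^ (\<Sum>i<n. \<alpha> i) * e"
      by (rule prod_diff_bound[OF b M e0])
    also have "\<dots> \<le> real d * M ^ d * e"
    proof -
      have sdr: "real (\<Sum>i<n. \<alpha> i) \<le> real d" using sd by (simp only: of_nat_le_iff)
      have pw: "M ^ (\<Sum>i<n. \<alpha> i) \<le> M ^ d" by (rule power_increasing[OF sd M])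
      have "real (\<Sum>i<n. \<alpha> i) * M ^ (\<Sum>i<n. \<alpha> i) \<le> real d * M ^ d"
        by (rule mult_mono[OF sdr pw]) (use M in auto)
      thus ?thesis by (rule mult_right_mono[OF _ e0])
    qed
    finally have "\<bar>(\<Prod>i<n. x i ^ \<alpha> i) - (\<Prod>i<n. y i ^ \<alpha> i)\<bar> \<le> real d * M ^ d * e" .
    thus "\<bar>real_of_int (g \<alpha>) * ((\<Prod>i<n. x i ^ \<alpha> i) - (\<Prod>i<n. y i ^ \<alpha> i))\<bar> \<le> real H * (real d * M ^ d * e)"
      unfolding abs_mult using gb by (intro mult_mono) auto
  qed
  also have "\<dots> = real (card ?S) * (real H * (real d * M ^ d * e))" by simp
  also have "\<dots> \<le> real ((d+1)^n) * (real H * (real d * M ^ d * e))"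
  proof (rule mult_right_mono)
    show "real (card ?S) \<le> real ((d+1)^n)" using monos_finite_card[of n d] by (simp only: of_nat_le_iff)
    show "0 \<le> real H * (real d * M ^ d * e)" using M e0 by simp
  qed
  finally show ?thesis by (simp add: mult.assoc)
qed

lemma aff_comb:
  assumes "finite T" "(\<Sum>t\<in>T. mu t) = 1"
  shows "aff_eval n a b (\<lambda>k. \<Sum>t\<in>T. mu t * v t k) = (\<Sum>t\<in>T. mu t * aff_eval n a b (v t))"
proof -
  have "aff_eval n a b (\<lambda>k. \<Sum>t\<in>T. mu t * v t k) = (\<Sum>k<n. \<Sum>t\<in>T. real_of_int (a k) * (mu t * v t k)) + real_of_int b"
    by (simp add: aff_eval_def sum_distrib_left)
  also have "\<dots> = (\<Sum>t\<in>T. \<Sum>k<n. mu t * (real_of_int (a k) * v t k)) + (\<Sum>t\<in>T. mu t) * real_of_int b"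
    using assms(2) by (subst sum.swap) (simp add: mult_ac)
  also have "\<dots> = (\<Sum>t\<in>T. mu t * aff_eval n a b (v t))"
    by (simp add: aff_eval_def sum_distrib_left sum_distrib_right sum.distrib algebra_simps)
  finally show ?thesis .
qed

lemma comb_in_P:
  assumes "finite T" "(\<Sum>t\<in>T. mu t) = 1" "\<forall>t\<in>T. 0 \<le> mu t \<and> v t \<in> PS n m A B"
  shows "(\<lambda>k. \<Sum>t\<in>T. mu t * v t k) \<in> PS n m A B"
  unfolding PS_def
proof (intro CollectI conjI allI impI)
  fix i assume "n \<le> i" thus "(\<Sum>t\<in>T. mu t * v t i) = 0" using assms(3) by (simp add: PS_def)
next
  fix i assume i: "i < m"
  have "(\<Sum>t\<in>T. mu t * aff_eval n (A i) (B i) (v t)) \<le> 0"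
    by (rule sum_nonpos) (use assms(3) i in \<open>auto simp: PS_def intro!: mult_nonneg_nonpos\<close>)
  thus "aff_eval n (A i) (B i) (\<lambda>k. \<Sum>t\<in>T. mu t * v t k) \<le> 0" by (simp add: aff_comb[OF assms(1,2)])
qed




lemma int_size_mono: "\<bar>a\<bar> \<le> \<bar>b\<bar> \<Longrightarrow> int_size a \<le> int_size b"
proof -
  assume h: "\<bar>a\<bar> \<le> \<bar>b\<bar>"
  have "log 2 (real_of_int \<bar>a\<bar> + 1) \<le> log 2 (real_of_int \<bar>b\<bar> + 1)"
    using h by (subst log_le_cancel_iff) auto
  hence "\<lceil>log 2 (real_of_int \<bar>a\<bar> + 1)\<rceil> \<le> \<lceil>log 2 (real_of_int \<bar>b\<bar> + 1)\<rceil>" by (rule ceiling_mono)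
  hence "nat \<lceil>log 2 (real_of_int \<bar>a\<bar> + 1)\<rceil> \<le> nat \<lceil>log 2 (real_of_int \<bar>b\<bar> + 1)\<rceil>" by (rule nat_mono)
  thus ?thesis unfolding int_size_def by linarith
qed

lemma int_size_le:
  assumes "real_of_int \<bar>z\<bar> + 1 \<le> 2 ^ t"
  shows "int_size z \<le> 1 + t"
proof -
  have "log 2 (real_of_int \<bar>z\<bar> + 1) \<le> log 2 (2 ^ t)"
    using assms by (subst log_le_cancel_iff) auto
  also have "\<dots> = real t" by (simp add: log_pow_cancel)
  finally have "\<lceil>log 2 (real_of_int \<bar>z\<bar> + 1)\<rceil> \<le> int t" by (simp add: ceiling_le_iff)
  hence "nat \<lceil>log 2 (real_of_int \<bar>z\<bar> + 1)\<rceil> \<le> t" by (simp only: nat_le_iff)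
  thus ?thesis unfolding int_size_def by linarith
qed

lemma rat_size_Fract:
  assumes b: "b > 0"
  shows "rat_size (Rat.Fract a b) \<le> int_size a + int_size b"
proof -
  define g where "g = gcd a b"
  have g: "g > 0" using b by (simp add: g_def)
  have q: "quotient_of (Rat.Fract a b) = (a div g, b div g)"
    using b by (simp add: quotient_of_Fract normalize_def g_def Let_def)
  have "\<bar>a div g\<bar> \<le> \<bar>a\<bar>"
  proof (cases "a \<ge> 0")
    case True
    have "a div g \<le> a div 1" using True g by (intro zdiv_mono2) auto
    moreover have "a div g \<ge> 0" using True g by (simp add: div_int_pos_iff)
    ultimately show ?thesis using True by simp
  next
    case False
    have "a div 1 \<le> a div g" using g False by (intro zdiv_mono2_neg) auto
    hence "a div g \<ge> a" by simp
    moreover have "a div g < 0" using g False by (simp add: div_neg_pos_less0)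
    ultimately show ?thesis using False by simp
  qed
  moreover have "\<bar>b div g\<bar> \<le> \<bar>b\<bar>"
  proof -
    have "b div g \<le> b div 1" using b g by (intro zdiv_mono2) auto
    moreover have "b div g \<ge> 0" using b g by (simp add: div_int_pos_iff)
    ultimately show ?thesis using b by simp
  qed
  ultimately show ?thesis unfolding rat_size_def q
    using int_size_mono by (simp add: add_mono)
qed

lemma round_weights:
  fixes lam :: "nat \<Rightarrow> real" and N :: nat
  assumes N: "N > 0" and nn: "\<forall>t\<le>K. lam t \<ge> 0" and s1: "(\<Sum>t\<le>K. lam t) = 1"
  shows "\<exists>a::nat \<Rightarrow> nat. (\<Sum>t\<le>K. a t) = N \<and> (\<Sum>t\<le>K. \<bar>real (a t) / real N - lam t\<bar>) \<le> 2 * real K / real N"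
proof -
  define f where "f = (\<lambda>s. nat \<lfloor>real N * lam (Suc s)\<rfloor>)"
  define F where "F = (\<Sum>s<K. f s)"
  have fle: "real (f s) \<le> real N * lam (Suc s)" and fge: "real N * lam (Suc s) - 1 < real (f s)" if "s < K" for s
  proof -
    have "0 \<le> real N * lam (Suc s)" using nn that by simp
    thus "real (f s) \<le> real N * lam (Suc s)" "real N * lam (Suc s) - 1 < real (f s)"
      by (simp_all add: f_def)
  qed
  have sh: "(\<Sum>t\<le>K. lam t) = lam 0 + (\<Sum>s<K. lam (Suc s))" by (rule sum.atMost_shift)
  have "real F \<le> (\<Sum>s<K. real N * lam (Suc s))" unfolding F_def of_nat_sum by (rule sum_mono) (use fle in auto)
  also have "\<dots> = real N * (1 - lam 0)"
  proof -
    have "(\<Sum>s<K. lam (Suc s)) = 1 - lam 0" using s1 sh by simp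
    thus ?thesis by (simp add: sum_distrib_left[symmetric])
  qed
  also have "\<dots> \<le> real N" using nn by (simp add: mult_left_le)
  finally have FN: "F \<le> N" by simp
  define a where "a = (\<lambda>t. case t of 0 \<Rightarrow> N - F | Suc s \<Rightarrow> f s)"
  have "(\<Sum>t\<le>K. a t) = a 0 + (\<Sum>s<K. a (Suc s))" by (rule sum.atMost_shift)
  also have "\<dots> = N" using FN by (simp add: a_def F_def)
  finally have sa: "(\<Sum>t\<le>K. a t) = N" .
  have eS: "\<bar>real (f s) / real N - lam (Suc s)\<bar> \<le> 1 / real N" if "s < K" for s
  proof -
    have "\<bar>real (f s) - real N * lam (Suc s)\<bar> \<le> 1" using fle[OF that] fge[OF that] by simp
    hence "\<bar>real (f s) - real N * lam (Suc s)\<bar> / real N \<le> 1 / real N"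
      using N by (simp add: divide_right_mono)
    moreover have "\<bar>real (f s) - real N * lam (Suc s)\<bar> / real N = \<bar>real (f s) / real N - lam (Suc s)\<bar>"
      using N by (simp add: field_simps)
    ultimately show ?thesis by simp
  qed
  have e0: "\<bar>real (a 0) / real N - lam 0\<bar> \<le> real K / real N"
  proof -
    have "real (a 0) / real N - lam 0 = (\<Sum>s<K. lam (Suc s) - real (f s) / real N)"
    proof -
      have a0: "real (a 0) = real N - real F" using FN by (simp add: a_def of_nat_diff)
      have r1: "(\<Sum>s<K. lam (Suc s) - real (f s) / real N) = (1 - lam 0) - real F / real N"
        using s1 sh by (simp add: sum_subtractf sum_divide_distrib F_def)
      show ?thesis using a0 r1 N by (simp add: diff_divide_distrib)
    qed
    hence "\<bar>real (a 0) / real N - lam 0\<bar> \<le> (\<Sum>s<K. \<bar>real (f s) / real N - lam (Suc s)\<bar>)"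
      by (simp add: abs_minus_commute sum_abs)
    also have "\<dots> \<le> (\<Sum>s<K. 1 / real N)" by (rule sum_mono) (use eS in auto)
    also have "\<dots> = real K / real N" by simp
    finally show ?thesis .
  qed
  have "(\<Sum>t\<le>K. \<bar>real (a t) / real N - lam t\<bar>) = \<bar>real (a 0) / real N - lam 0\<bar> + (\<Sum>s<K. \<bar>real (f s) / real N - lam (Suc s)\<bar>)"
    by (subst sum.atMost_shift) (simp add: a_def)
  also have "\<dots> \<le> real K / real N + (\<Sum>s<K. 1 / real N)"
    by (intro add_mono e0 sum_mono) (use eS in auto)
  also have "\<dots> = 2 * real K / real N" by simp
  finally show ?thesis using sa by blast
qed




lemma poly4:
  fixes s :: nat assumes s: "1 \<le> s"
  shows "s + s*(4 + (s*s+s*s) + 2*((1+s+s+s+s*s+s+s+(s*s+s*s)*(s+1)) + (s*s+s*s)*(s+1))) \<le> 40*s^4"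
proof -
  have a: "s^1 \<le> s^4" using s by (intro power_increasing) auto
  have b: "s^2 \<le> s^4" using s by (intro power_increasing) auto
  have c: "s^3 \<le> s^4" using s by (intro power_increasing) auto
  have e: "s + s*(4 + (s*s+s*s) + 2*((1+s+s+s+s*s+s+s+(s*s+s*s)*(s+1)) + (s*s+s*s)*(s+1))) = 7*s + 10*s^2 + 12*s^3 + 8*s^4"
    by (simp add: algebra_simps power2_eq_square power3_eq_cube power4_eq_xxxx)
  show ?thesis unfolding e using a b c by simp
qed

lemma log_ceil:
  fixes X :: real assumes X: "1 \<le> X"
  shows "X \<le> 2 ^ nat \<lceil>log 2 X\<rceil> \<and> real (nat \<lceil>log 2 X\<rceil>) \<le> log 2 X + 1"
proof -
  have l0: "0 \<le> log 2 X" using X by simp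
  have cl: "real (nat \<lceil>log 2 X\<rceil>) = of_int \<lceil>log 2 X\<rceil>" using l0 by (intro of_nat_nat) simp
  have c1: "log 2 X \<le> real (nat \<lceil>log 2 X\<rceil>)" unfolding cl by (rule le_of_int_ceiling)
  have c2: "real (nat \<lceil>log 2 X\<rceil>) \<le> log 2 X + 1" unfolding cl by (rule of_int_ceiling_le_add_one)
  have "X = 2 powr (log 2 X)" using X by simp
  also have "\<dots> \<le> 2 powr (real (nat \<lceil>log 2 X\<rceil>))"
    using c1 by (intro powr_mono) auto
  also have "\<dots> = 2 ^ nat \<lceil>log 2 X\<rceil>" by (rule powr_realpow) simp
  finally show ?thesis using c2 by linarith
qed

lemma log_ceil_nat:
  fixes x :: nat
  shows "x + 1 \<le> 2 ^ nat \<lceil>log 2 (real x + 1)\<rceil> \<and> real (nat \<lceil>log 2 (real x + 1)\<rceil>) \<le> log 2 (real x + 1) + 1"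
proof -
  have "real x + 1 \<le> 2 ^ nat \<lceil>log 2 (real x + 1)\<rceil> \<and> real (nat \<lceil>log 2 (real x + 1)\<rceil>) \<le> log 2 (real x + 1) + 1"
    by (rule log_ceil) simp
  moreover have "real x + 1 \<le> 2 ^ nat \<lceil>log 2 (real x + 1)\<rceil> \<longleftrightarrow> x + 1 \<le> 2 ^ nat \<lceil>log 2 (real x + 1)\<rceil>"
    using of_nat_le_iff[of "x+1" "2 ^ nat \<lceil>log 2 (real x + 1)\<rceil>", where 'a=real] by (simp add: add.commute)
  ultimately show ?thesis by blast
qed

definition Tf :: "nat \<Rightarrow> nat \<Rightarrow> nat \<Rightarrow> nat \<Rightarrow> nat \<Rightarrow> nat" where
  "Tf n' d' ll lh ld = n' + n'*(4 + (n'*n' + lh*n') + 2*((1+n'+ll+ld+d'*n'+lh+d'+(n'*n'+lh*n')*(d'+1)) + (n'*n'+lh*n')*(n'+1)))"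

lemma Tf_bound:
  assumes "n' \<le> s" "d' \<le> s" "ll \<le> s" "lh \<le> s" "ld \<le> s" "1 \<le> s"
  shows "Tf n' d' ll lh ld \<le> 40 * s^4"
proof -
  have "Tf n' d' ll lh ld \<le> Tf s s s s s"
    unfolding Tf_def using assms by (intro add_le_mono mult_le_mono order_refl) auto
  also have "\<dots> \<le> 40 * s^4" unfolding Tf_def using poly4[OF assms(6)] .
  finally show ?thesis .
qed


lemma core:
  fixes n m l d H \<delta> :: nat and A :: "nat \<Rightarrow> nat \<Rightarrow> int" and B :: "nat \<Rightarrow> int"
    and G :: "nat \<Rightarrow> (nat \<Rightarrow> nat) \<Rightarrow> int" and xs :: "nat \<Rightarrow> real"
  assumes d1: "d \<ge> 1" and \<delta>1: "\<delta> \<ge> 1"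
    and AB: "\<forall>i<m. (\<forall>k<n. \<bar>A i k\<bar> \<le> int H) \<and> \<bar>B i\<bar> \<le> int H"
    and Gb: "\<forall>j<l. \<forall>\<alpha>\<in>monomials_upto n d. \<bar>G j \<alpha>\<bar> \<le> int H"
    and bd: "\<exists>M. \<forall>x\<in>PS n m A B. \<forall>i<n. \<bar>x i\<bar> \<le> M"
    and xsP: "xs \<in> PS n m A B" and xsG: "\<forall>j<l. poly_eval n d (G j) xs \<le> 0"
  shows "\<exists>q::nat\<Rightarrow>rat. (\<lambda>i. real_of_rat (q i)) \<in> PS n m A B \<and>
     (\<forall>j<l. real l * real \<delta> * poly_eval n d (G j) (\<lambda>i. real_of_rat (q i)) \<le> 1) \<and>
     vec_size n q \<le> Tf n d (nat \<lceil>log 2 (real l + 1)\<rceil>) (nat \<lceil>log 2 (real H + 1)\<rceil>) (nat \<lceil>log 2 (real \<delta> + 1)\<rceil>)"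
proof -
  interpret LP n m A B H using AB bd by unfold_locales auto
  have i0: "indep []" by (simp add: indep_def)
  obtain K lam v where cr: "K \<le> n" "\<forall>t\<le>K. 0 \<le> lam t \<and> v t \<in> P \<and> good (v t)"
      "(\<Sum>t\<le>K. lam t) = 1" "\<forall>k. xs k = (\<Sum>t\<le>K. lam t * v t k)"
    using carath[OF xsP i0] by auto
  define BB where "BB = Bn"
  have BB1: "1 \<le> BB" unfolding BB_def Bn_def
    using fact_ge_1[of n, where 'a=nat] by (simp add: Suc_le_eq)
  have "\<forall>t\<in>{..K}. \<exists>D::int. 1 \<le> D \<and> D \<le> int BB \<and> (\<forall>k<n. \<exists>w::int. v t k * of_int D = of_int w \<and> \<bar>w\<bar> \<le> int BB)"
    using cr(2) by (auto simp: good_def BB_def)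
  then have "\<exists>Df. \<forall>t\<in>{..K}. 1 \<le> Df t \<and> Df t \<le> int BB \<and> (\<forall>k<n. \<exists>w::int. v t k * of_int (Df t) = of_int w \<and> \<bar>w\<bar> \<le> int BB)"
    by (rule bchoice)
  then obtain Df where Df: "\<forall>t\<in>{..K}. 1 \<le> Df t \<and> Df t \<le> int BB \<and> (\<forall>k<n. \<exists>w::int. v t k * of_int (Df t) = of_int w \<and> \<bar>w\<bar> \<le> int BB)"
    by (rule exE)
  have vz: "v t k = 0" if "t \<le> K" "n \<le> k" for t k using cr(2) that by (auto simp: good_def)
  have vb: "\<bar>v t k\<bar> \<le> real BB \<and> v t k * of_int (Df t) \<in> \<int>" if t: "t \<le> K" for t k
  proof (cases "k < n")
    case False thus ?thesis using vz[OF t] by simp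
  next
    case True
    then obtain w where w: "v t k * of_int (Df t) = of_int w" "\<bar>w\<bar> \<le> int BB" using Df t by auto
    have D1: "1 \<le> real_of_int (Df t)" using Df t by auto
    have "\<bar>v t k\<bar> \<le> \<bar>v t k\<bar> * real_of_int (Df t)" using D1 by (simp add: mult_le_cancel_left1)
    also have "\<dots> = \<bar>v t k * real_of_int (Df t)\<bar>" using D1 by (simp add: abs_mult)
    also have "\<dots> = \<bar>real_of_int w\<bar>" using w(1) by simp
    also have "\<dots> \<le> real BB" using w(2) by (simp add: of_int_abs[symmetric] del: of_int_abs)
    finally show ?thesis using w(1) by simp
  qed
  define N :: nat where "N = 2*(n+1)*(l+1)*\<delta>*(d+1)^n*(H+1)*d*BB^(d+1)"
  have N0: "N > 0" using d1 \<delta>1 BB1 by (simp add: N_def)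
  obtain a where a: "(\<Sum>t\<le>K. a t) = N" "(\<Sum>t\<le>K. \<bar>real (a t) / real N - lam t\<bar>) \<le> 2 * real K / real N"
    using round_weights[OF N0, of K lam] cr(2,3) by auto
  define mu where "mu = (\<lambda>t. real (a t) / real N)"
  have mu1: "(\<Sum>t\<le>K. mu t) = 1"
    using a(1) N0 by (simp add: mu_def sum_divide_distrib[symmetric] flip: of_nat_sum)
  define p where "p = (\<lambda>k. \<Sum>t\<le>K. mu t * v t k)"
  have pP: "p \<in> P" unfolding p_def
    by (rule comb_in_P) (use mu1 cr(2) in \<open>auto simp: mu_def\<close>)
  define e where "e = 2 * real K / real N * real BB"
  have e0: "0 \<le> e" by (simp add: e_def)
  have pe: "\<bar>p k - xs k\<bar> \<le> e" for k
  proof -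
    have "p k - xs k = (\<Sum>t\<le>K. (mu t - lam t) * v t k)"
      using cr(4) by (simp add: p_def algebra_simps sum_subtractf)
    hence "\<bar>p k - xs k\<bar> \<le> (\<Sum>t\<le>K. \<bar>mu t - lam t\<bar> * \<bar>v t k\<bar>)"
      by (simp add: abs_mult[symmetric] sum_abs)
    also have "\<dots> \<le> (\<Sum>t\<le>K. \<bar>mu t - lam t\<bar> * real BB)"
      by (rule sum_mono) (use vb in \<open>auto intro: mult_left_mono\<close>)
    also have "\<dots> = (\<Sum>t\<le>K. \<bar>mu t - lam t\<bar>) * real BB" by (simp add: sum_distrib_right)
    also have "\<dots> \<le> 2 * real K / real N * real BB"
      using a(2) by (intro mult_right_mono) (auto simp: mu_def)
    finally show ?thesis by (simp add: e_def)
  qed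
  have pb: "\<bar>p k\<bar> \<le> real BB" for k
  proof -
    have "\<bar>p k\<bar> \<le> (\<Sum>t\<le>K. \<bar>mu t * v t k\<bar>)" unfolding p_def by (rule sum_abs)
    also have "\<dots> \<le> (\<Sum>t\<le>K. mu t * real BB)"
    proof (rule sum_mono)
      fix t assume "t \<in> {..K}"
      hence "\<bar>v t k\<bar> \<le> real BB" using vb by auto
      moreover have "0 \<le> mu t" by (simp add: mu_def)
      ultimately show "\<bar>mu t * v t k\<bar> \<le> mu t * real BB" by (simp add: abs_mult mult_left_mono)
    qed
    also have "\<dots> = real BB" using mu1 by (simp add: sum_distrib_right[symmetric])
    finally show ?thesis .
  qed
  have xb: "\<bar>xs k\<bar> \<le> real BB" for k
  proof -
    have "\<bar>xs k\<bar> \<le> (\<Sum>t\<le>K. \<bar>lam t * v t k\<bar>)" unfolding cr(4)[rule_format, of k] by (rule sum_abs)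
    also have "\<dots> \<le> (\<Sum>t\<le>K. lam t * real BB)"
    proof (rule sum_mono)
      fix t assume "t \<in> {..K}"
      hence "\<bar>v t k\<bar> \<le> real BB" "0 \<le> lam t" using vb cr(2) by auto
      thus "\<bar>lam t * v t k\<bar> \<le> lam t * real BB" by (simp add: abs_mult mult_left_mono)
    qed
    also have "\<dots> = real BB" using cr(3) by (simp add: sum_distrib_right[symmetric])
    finally show ?thesis .
  qed
  have keyN: "2*K*l*\<delta>*(d+1)^n*H*d*BB^(d+1) \<le> N"
    unfolding N_def using cr(1) by (intro mult_le_mono order_refl) auto
  have Gp: "real l * real \<delta> * poly_eval n d (G j) p \<le> 1" if j: "j < l" for j
  proof -
    let ?L = "real ((d+1)^n) * real H * real d * real BB ^ d"
    have lip: "\<bar>poly_eval n d (G j) p - poly_eval n d (G j) xs\<bar> \<le> ?L * e"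
      by (rule poly_lip) (use pb xb pe BB1 e0 Gb j in auto)
    have g: "poly_eval n d (G j) p \<le> ?L * e" using lip xsG j by auto
    have "real l * real \<delta> * (?L * e) = real (2*K*l*\<delta>*(d+1)^n*H*d*BB^(d+1)) / real N"
      by (simp add: e_def power_Suc field_simps)
    also have "\<dots> \<le> 1"
    proof -
      have r: "real (2*K*l*\<delta>*(d+1)^n*H*d*BB^(d+1)) \<le> real N" using keyN by (simp only: of_nat_le_iff)
      have "0 < real N" using N0 by simp
      thus ?thesis using r by (simp only: divide_le_eq_1_pos)
    qed
    finally have "real l * real \<delta> * (?L * e) \<le> 1" .
    moreover have "real l * real \<delta> * poly_eval n d (G j) p \<le> real l * real \<delta> * (?L * e)"
      using g by (intro mult_left_mono) auto
    ultimately show ?thesis by linarith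
  qed
  define Den :: int where "Den = int N * (\<Prod>t\<le>K. Df t)"
  have Dfpos: "0 < Df t" if "t \<le> K" for t
  proof -
    have "t \<in> {..K}" using that by simp
    hence "1 \<le> Df t" using Df by blast
    thus ?thesis by simp
  qed
  have Den1: "1 \<le> Den"
  proof -
    have "0 < (\<Prod>t\<le>K. Df t)" by (rule prod_pos) (use Dfpos in auto)
    moreover have "0 < int N" using N0 by simp
    ultimately have "0 < Den" unfolding Den_def by (rule mult_pos_pos[rotated])
    thus ?thesis by simp
  qed
  have pint: "p k * of_int Den \<in> \<int>" for k
  proof -
    have "p k * of_int Den = (\<Sum>t\<le>K. real (a t) * (v t k * of_int (Df t)) * of_int (\<Prod>s\<in>{..K}-{t}. Df s))"
      unfolding p_def sum_distrib_right
    proof (rule sum.cong[OF refl])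
      fix t assume t: "t \<in> {..K}"
      have pr: "(\<Prod>t\<le>K. Df t) = Df t * (\<Prod>s\<in>{..K}-{t}. Df s)" using t by (simp add: prod.remove)
      show "mu t * v t k * of_int Den = real (a t) * (v t k * of_int (Df t)) * of_int (\<Prod>s\<in>{..K}-{t}. Df s)"
        using N0 unfolding Den_def pr by (simp add: mu_def field_simps)
    qed
    also have "\<dots> \<in> \<int>"
    proof (rule Ints_sum)
      fix t assume "t \<in> {..K}"
      hence vi: "v t k * of_int (Df t) \<in> \<int>" using vb by auto
      show "real (a t) * (v t k * of_int (Df t)) * of_int (\<Prod>s\<in>{..K}-{t}. Df s) \<in> \<int>"
        by (rule Ints_mult[OF Ints_mult[OF Ints_of_nat vi] Ints_of_int])
    qed
    finally show ?thesis .
  qed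
  define Num where "Num = (\<lambda>k. \<lfloor>p k * of_int Den\<rfloor>)"
  have Num: "real_of_int (Num k) = p k * of_int Den" for k
    using pint[of k] by (auto simp: Num_def elim!: Ints_cases)
  define q where "q = (\<lambda>k. if k < n then Rat.Fract (Num k) Den else 0)"
  have qp: "(\<lambda>i. real_of_rat (q i)) = p"
  proof
    fix k show "real_of_rat (q k) = p k"
    proof (cases "k < n")
      case True thus ?thesis using Den1 Num[of k] by (simp add: q_def of_rat_rat)
    next
      case False thus ?thesis using pP by (simp add: q_def PS_def)
    qed
  qed
  define Ll where "Ll = nat \<lceil>log 2 (real l + 1)\<rceil>"
  define Lh where "Lh = nat \<lceil>log 2 (real H + 1)\<rceil>"
  define Ld where "Ld = nat \<lceil>log 2 (real \<delta> + 1)\<rceil>"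
  have Ll: "l + 1 \<le> 2 ^ Ll" using log_ceil_nat[of l] by (simp add: Ll_def)
  have Lh: "H + 1 \<le> 2 ^ Lh" using log_ceil_nat[of H] by (simp add: Lh_def)
  have Ld: "\<delta> + 1 \<le> 2 ^ Ld" using log_ceil_nat[of \<delta>] by (simp add: Ld_def)
  define EB where "EB = n*n + Lh*n"
  have BBle: "BB \<le> 2 ^ EB"
  proof -
    have "fact n \<le> n ^ n" using fact_le_power[of n, where 'a=nat] by simp
    also have "\<dots> \<le> (2 ^ n) ^ n" by (intro power_mono) (auto intro: less_imp_le less_exp)
    finally have f: "fact n \<le> (2::nat) ^ (n*n)" by (simp add: power_mult)
    have h: "(H+1) ^ n \<le> (2::nat) ^ (Lh*n)" using Lh by (simp add: power_mult power_mono)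
    have "BB \<le> 2 ^ (n*n) * 2 ^ (Lh*n)" unfolding BB_def Bn_def by (rule mult_le_mono[OF f h])
    thus ?thesis by (simp add: EB_def power_add)
  qed
  define EN where "EN = 1 + n + Ll + Ld + d*n + Lh + d + EB*(d+1)"
  have Nle: "N \<le> 2 ^ EN"
  proof -
    have n1: "n + 1 \<le> 2 ^ n" by (induction n) auto
    have dd: "d + 1 \<le> 2 ^ d" by (induction d) auto
    have "N \<le> 2 * 2 ^ n * 2 ^ Ll * 2 ^ Ld * (2 ^ d) ^ n * 2 ^ Lh * 2 ^ d * (2 ^ EB) ^ (d+1)"
      unfolding N_def using n1 Ll Ld dd Lh BBle
      by (intro mult_le_mono power_mono order_refl) auto
    also have "\<dots> = 2 ^ EN" by (simp add: EN_def power_add power_mult[symmetric] mult.commute)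
    finally show ?thesis .
  qed
  define ED where "ED = EN + EB*(n+1)"
  have Denle: "Den \<le> 2 ^ ED"
  proof -
    have "(\<Prod>t\<le>K. Df t) \<le> (\<Prod>t\<le>K. int BB)"
    proof (rule prod_mono)
      fix t assume "t \<in> {..K}"
      hence "1 \<le> Df t \<and> Df t \<le> int BB" using Df by blast
      thus "0 \<le> Df t \<and> Df t \<le> int BB" by simp
    qed
    also have "\<dots> = int BB ^ (K+1)" by simp
    also have "\<dots> \<le> int BB ^ (n+1)" using BB1 cr(1) by (intro power_increasing) auto
    also have "\<dots> \<le> (2 ^ EB) ^ (n+1)" using BBle by (intro power_mono) auto
    finally have pr0: "(\<Prod>t\<le>K. Df t) \<le> (2 ^ EB) ^ (n+1)" .
    have pr: "(\<Prod>t\<le>K. Df t) \<le> 2 ^ (EB*(n+1))" using pr0 by (simp only: power_mult)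
    have "Den \<le> int N * 2 ^ (EB*(n+1))" unfolding Den_def using pr by (intro mult_left_mono) auto
    also have "\<dots> \<le> 2 ^ EN * 2 ^ (EB*(n+1))" using Nle by (intro mult_right_mono) (auto simp flip: of_nat_le_iff)
    finally show ?thesis by (simp add: ED_def power_add)
  qed
  have rs: "rat_size (q k) \<le> 4 + EB + 2*ED" if k: "k < n" for k
  proof -
    have r1: "rat_size (q k) \<le> int_size (Num k) + int_size Den"
      using k Den1 by (simp add: q_def rat_size_Fract)
    have "real_of_int \<bar>Num k\<bar> = \<bar>p k\<bar> * real_of_int Den" using Num[of k] Den1 by (simp add: abs_mult)
    also have "\<dots> \<le> real BB * real_of_int Den" using pb Den1 by (intro mult_right_mono) auto
    also have "\<dots> \<le> 2 ^ EB * 2 ^ ED"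
    proof (intro mult_mono)
      show "real BB \<le> 2 ^ EB" using BBle by (metis of_nat_le_iff of_nat_numeral of_nat_power)
      show "real_of_int Den \<le> 2 ^ ED" using Denle by (metis of_int_le_iff of_int_numeral of_int_power)
    qed (use Den1 in auto)
    finally have nb: "real_of_int \<bar>Num k\<bar> \<le> 2 ^ (EB + ED)" by (simp add: power_add)
    have "real_of_int \<bar>Num k\<bar> + 1 \<le> 2 ^ (1 + EB + ED)"
      using nb one_le_power[of "2::real" "EB + ED"] by (simp add: power_add)
    hence i1: "int_size (Num k) \<le> 1 + (1 + EB + ED)" by (rule int_size_le)
    have db: "real_of_int \<bar>Den\<bar> \<le> 2 ^ ED" using Denle Den1
      by simp
    have "real_of_int \<bar>Den\<bar> + 1 \<le> 2 ^ (1 + ED)"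
    proof -
      have "(2::real) ^ (1 + ED) = 2 * 2 ^ ED" by simp
      moreover have "(1::real) \<le> 2 ^ ED" by (rule one_le_power) simp
      ultimately show ?thesis using db by linarith
    qed
    hence i2: "int_size Den \<le> 1 + (1 + ED)" by (rule int_size_le)
    show ?thesis using r1 i1 i2 by linarith
  qed
  have "vec_size n q \<le> n + n * (4 + EB + 2*ED)"
  proof -
    have "(\<Sum>k<n. rat_size (q k)) \<le> card {..<n} * (4 + EB + 2*ED)"
      using sum_bounded_above[of "{..<n}" "\<lambda>k. rat_size (q k)" "4 + EB + 2*ED"] rs by simp
    thus ?thesis by (simp add: vec_size_def)
  qed
  also have "n + n * (4 + EB + 2*ED) = Tf n d Ll Lh Ld"
    by (simp add: Tf_def ED_def EN_def EB_def)
  finally have vs: "vec_size n q \<le> Tf n d Ll Lh Ld" .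
  show ?thesis using pP Gp vs qp by (auto simp: Ll_def Lh_def Ld_def)
qed


lemma final_bound:
  assumes d1: "d \<ge> 1"
  shows "real (Tf n d (nat \<lceil>log 2 (real l + 1)\<rceil>) (nat \<lceil>log 2 (real H + 1)\<rceil>) (nat \<lceil>log 2 (real \<delta> + 1)\<rceil>))
    \<le> 10240 * (real n + real d + log 2 (real l + 1) + log 2 (real H + 1) + log 2 (real \<delta> + 1)) ^ 4"
proof -
  define Ll where "Ll = nat \<lceil>log 2 (real l + 1)\<rceil>"
  define Lh where "Lh = nat \<lceil>log 2 (real H + 1)\<rceil>"
  define Ld where "Ld = nat \<lceil>log 2 (real \<delta> + 1)\<rceil>"
  define S where "S = real n + real d + log 2 (real l + 1) + log 2 (real H + 1) + log 2 (real \<delta> + 1)"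
  define s where "s = n + d + Ll + Lh + Ld"
  have s1: "1 \<le> s" using d1 by (simp add: s_def)
  have T: "Tf n d Ll Lh Ld \<le> 40 * s ^ 4" by (rule Tf_bound) (use s1 in \<open>auto simp: s_def\<close>)
  have l1: "real Ll \<le> log 2 (real l + 1) + 1" using log_ceil_nat[of l] by (simp add: Ll_def)
  have l2: "real Lh \<le> log 2 (real H + 1) + 1" using log_ceil_nat[of H] by (simp add: Lh_def)
  have l3: "real Ld \<le> log 2 (real \<delta> + 1) + 1" using log_ceil_nat[of \<delta>] by (simp add: Ld_def)
  have g1: "0 \<le> log 2 (real l + 1)" "0 \<le> log 2 (real H + 1)" "0 \<le> log 2 (real \<delta> + 1)" by simp_all
  have dr: "1 \<le> real d" using d1 by simp
  have S1: "1 \<le> S" unfolding S_def using dr g1 by linarith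
  have sS: "real s \<le> 4 * S" using l1 l2 l3 S1 by (simp add: s_def S_def)
  have "real (Tf n d Ll Lh Ld) \<le> 40 * real s ^ 4"
    using T by (metis of_nat_le_iff of_nat_mult of_nat_numeral of_nat_power)
  also have "\<dots> \<le> 40 * (4 * S) ^ 4" using sS by (intro mult_left_mono power_mono) auto
  also have "\<dots> = 10240 * S ^ 4" by (simp add: power_mult_distrib)
  finally show ?thesis by (simp add: Ll_def Lh_def Ld_def S_def)
qed

theorem proposition2:
  shows "\<exists>(C::real) (k::nat). \<forall>(n::nat) (m::nat) (l::nat) (d::nat) (H::nat) (\<delta>::nat)
     (A :: nat \<Rightarrow> nat \<Rightarrow> int) (B :: nat \<Rightarrow> int) (G :: nat \<Rightarrow> (nat \<Rightarrow> nat) \<Rightarrow> int).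
     d \<ge> 1 \<longrightarrow> \<delta> \<ge> 1 \<longrightarrow>
     (\<forall>i<m. \<exists>k<n. A i k \<noteq> 0) \<longrightarrow>
     (\<forall>i<m. (\<forall>k<n. \<bar>A i k\<bar> \<le> int H) \<and> \<bar>B i\<bar> \<le> int H) \<longrightarrow>
     (\<forall>j<l. \<forall>\<alpha>\<in>monomials_upto n d. \<bar>G j \<alpha>\<bar> \<le> int H) \<longrightarrow>
     (let P = {x :: nat \<Rightarrow> real. (\<forall>i\<ge>n. x i = 0) \<and> (\<forall>i<m. aff_eval n (A i) (B i) x \<le> 0)};
          R = {x \<in> P. \<forall>j<l. poly_eval n d (G j) x \<le> 0};
          S = {x \<in> P. \<forall>j<l. real l * real \<delta> * poly_eval n d (G j) x \<le> 1}
      in (\<exists>M. \<forall>x\<in>P. \<forall>i<n. \<bar>x i\<bar> \<le> M) \<longrightarrow> R \<noteq> {} \<longrightarrow>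
         (\<exists>q :: nat \<Rightarrow> rat. (\<lambda>i. real_of_rat (q i)) \<in> S \<and>
            real (vec_size n q) \<le> C * (real n + real d + log 2 (real l + 1)
                + log 2 (real H + 1) + log 2 (real \<delta> + 1)) ^ k))"
proof (intro exI[of _ "10240::real"] exI[of _ "4::nat"] allI impI)
  fix n m l d H \<delta> :: nat and A :: "nat \<Rightarrow> nat \<Rightarrow> int" and B :: "nat \<Rightarrow> int"
    and G :: "nat \<Rightarrow> (nat \<Rightarrow> nat) \<Rightarrow> int"
  assume d1: "d \<ge> 1" and \<delta>1: "\<delta> \<ge> 1" and nz: "\<forall>i<m. \<exists>k<n. A i k \<noteq> 0"
    and AB: "\<forall>i<m. (\<forall>k<n. \<bar>A i k\<bar> \<le> int H) \<and> \<bar>B i\<bar> \<le> int H"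
    and Gb: "\<forall>j<l. \<forall>\<alpha>\<in>monomials_upto n d. \<bar>G j \<alpha>\<bar> \<le> int H"
  have PE: "{x :: nat \<Rightarrow> real. (\<forall>i\<ge>n. x i = 0) \<and> (\<forall>i<m. aff_eval n (A i) (B i) x \<le> 0)} = PS n m A B"
    by (simp add: PS_def)
  show "let P = {x :: nat \<Rightarrow> real. (\<forall>i\<ge>n. x i = 0) \<and> (\<forall>i<m. aff_eval n (A i) (B i) x \<le> 0)};
          R = {x \<in> P. \<forall>j<l. poly_eval n d (G j) x \<le> 0};
          S = {x \<in> P. \<forall>j<l. real l * real \<delta> * poly_eval n d (G j) x \<le> 1}
      in (\<exists>M. \<forall>x\<in>P. \<forall>i<n. \<bar>x i\<bar> \<le> M) \<longrightarrow> R \<noteq> {} \<longrightarrow>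
         (\<exists>q :: nat \<Rightarrow> rat. (\<lambda>i. real_of_rat (q i)) \<in> S \<and>
            real (vec_size n q) \<le> 10240 * (real n + real d + log 2 (real l + 1)
                + log 2 (real H + 1) + log 2 (real \<delta> + 1)) ^ 4)"
    unfolding Let_def PE
  proof (intro impI)
    assume bd: "\<exists>M. \<forall>x\<in>PS n m A B. \<forall>i<n. \<bar>x i\<bar> \<le> M"
      and Rne: "{x \<in> PS n m A B. \<forall>j<l. poly_eval n d (G j) x \<le> 0} \<noteq> {}"
    then obtain xs where xsP: "xs \<in> PS n m A B" and xsG: "\<forall>j<l. poly_eval n d (G j) xs \<le> 0" by blast
    obtain q where q: "(\<lambda>i. real_of_rat (q i)) \<in> PS n m A B"
      "\<forall>j<l. real l * real \<delta> * poly_eval n d (G j) (\<lambda>i. real_of_rat (q i)) \<le> 1"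
      "vec_size n q \<le> Tf n d (nat \<lceil>log 2 (real l + 1)\<rceil>) (nat \<lceil>log 2 (real H + 1)\<rceil>) (nat \<lceil>log 2 (real \<delta> + 1)\<rceil>)"
      using core[OF d1 \<delta>1 AB Gb bd xsP xsG] by blast
    have "real (vec_size n q) \<le> real (Tf n d (nat \<lceil>log 2 (real l + 1)\<rceil>) (nat \<lceil>log 2 (real H + 1)\<rceil>) (nat \<lceil>log 2 (real \<delta> + 1)\<rceil>))"
      using q(3) by (simp only: of_nat_le_iff)
    also have "\<dots> \<le> 10240 * (real n + real d + log 2 (real l + 1) + log 2 (real H + 1) + log 2 (real \<delta> + 1)) ^ 4"
      by (rule final_bound[OF d1])
    finally show "\<exists>q :: nat \<Rightarrow> rat. (\<lambda>i. real_of_rat (q i)) \<in> {x \<in> PS n m A B. \<forall>j<l. real l * real \<delta> * poly_eval n d (G j) x \<le> 1} \<and>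
            real (vec_size n q) \<le> 10240 * (real n + real d + log 2 (real l + 1)
                + log 2 (real H + 1) + log 2 (real \<delta> + 1)) ^ 4"
      using q(1,2) by blast
  qed
qed


end
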